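(* Define for $a\in[1,2]$ and $b>1$ the function $g(a,b)=x\,x_1+y\,y_1$, where $$x=\frac{\sqrt{a^2-1}\,(a^3-8)}{a^6},\quad x_1=(\sqrt{a^2-1}-\sqrt{b^2-1})^3+a^3,\quad y=\frac{\sqrt{b^2-1}\,(b^3-8)}{b^6},\quad y_1=(\sqrt{a^2-1}-\sqrt{b^2-1})^3+b^3.$$ Then $g(a,b)\neq 0$ for all $(a,b)\in[1,2]\times[5/2,\sqrt2(\sqrt3+1)]$. *)

theory Defs
  imports Complex_Main
begin

definition g :: "real \<Rightarrow> real \<Rightarrow> real" where
  "g a b = (let x = sqrt (a^2 - 1) * (a^3 - 8) / a^6;
                x1 = (sqrt (a^2 - 1) - sqrt (b^2 - 1))^3 + a^3;
                y = sqrt (b^2 - 1) * (b^3 - 8) / b^6;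
                y1 = (sqrt (a^2 - 1) - sqrt (b^2 - 1))^3 + b^3
            in x * x1 + y * y1)"

end

theory Submission
  imports Defs
begin


definition boxok :: "real \<Rightarrow> real \<Rightarrow> real \<Rightarrow> real \<Rightarrow> real \<Rightarrow> real \<Rightarrow> real \<Rightarrow> real \<Rightarrow> bool" where
 "boxok al ah bl bh slo shi tlo thi \<longleftrightarrow>
   1 \<le> al \<and> ah \<le> 2 \<and> 2 \<le> bl \<and> 0 \<le> slo \<and> 0 \<le> shi \<and> 0 \<le> tlo \<and> 0 \<le> thi \<and>
   slo^2 \<le> al^2 - 1 \<and> ah^2 - 1 \<le> shi^2 \<and> tlo^2 \<le> bl^2 - 1 \<and> bh^2 - 1 \<le> thi^2 \<and>
   0 < bl^3 - (thi - slo)^3 \<and>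
   0 < min (slo*(8-ah^3)/ah^6 * ((tlo-shi)^3 - ah^3)) (shi*(8-al^3)/al^6 * ((tlo-shi)^3 - ah^3))
        + tlo*(bl^3-8)/bh^6 * (bl^3 - (thi - slo)^3)"

lemma box:
  assumes B: "boxok al ah bl bh slo shi tlo thi"
    and a: "al \<le> a" "a \<le> ah" and b: "bl \<le> b" "b \<le> bh"
  shows "g a b > 0"
proof -
  note B' = B[unfolded boxok_def]
  define s where "s = sqrt (a^2-1)"
  define t where "t = sqrt (b^2-1)"
  define X where "X = s*(8-a^3)/a^6"
  define Y where "Y = t*(b^3-8)/b^6"
  define d where "d = t - s"
  have a1: "1 \<le> a" "a \<le> 2" using a B' by auto
  have b1: "2 \<le> b" "0 < b" using b B' by auto
  have a2: "1 \<le> a^2" using a1 by (simp add: one_le_power)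
  have b2: "1 \<le> b^2" using b1 by (simp add: one_le_power)
  have "al^2 \<le> a^2" using a B' by (intro power_mono) auto
  hence slo: "slo \<le> s" unfolding s_def using B' by (intro real_le_rsqrt) auto
  have "a^2 \<le> ah^2" using a B' by (intro power_mono) auto
  hence shi: "s \<le> shi" unfolding s_def using B' a2 by (intro real_le_lsqrt) auto
  have "bl^2 \<le> b^2" using b B' by (intro power_mono) auto
  hence tlo: "tlo \<le> t" unfolding t_def using B' by (intro real_le_rsqrt) auto
  have "b^2 \<le> bh^2" using b B' by (intro power_mono) auto
  hence thi: "t \<le> thi" unfolding t_def using B' b2 by (intro real_le_lsqrt) auto
  have s0: "0 \<le> s" unfolding s_def using a2 by simp
  have "(tlo-shi)^3 \<le> d^3" unfolding d_def using shi tlo by (intro power_mono_odd) auto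
  hence e1: "(tlo-shi)^3 - ah^3 \<le> d^3 - a^3" using a B' by (smt (verit) power_mono)
  have "d^3 \<le> (thi-slo)^3" unfolding d_def using slo thi by (intro power_mono_odd) auto
  hence e2: "bl^3 - (thi - slo)^3 \<le> b^3 - d^3" using b B' by (smt (verit) power_mono)
  have a3: "al^3 \<le> a^3" "a^3 \<le> ah^3" "a^3 \<le> 8" "ah^3 \<le> 8" using a a1 B' power_mono[of a 2 3] power_mono[of ah 2 3]
    by (auto intro: power_mono)
  have a6: "al^6 \<le> a^6" "a^6 \<le> ah^6" using a B' by (auto intro: power_mono)
  have "X \<le> shi*(8-al^3)/al^6" unfolding X_def
  proof (rule frac_le)
    show "0 \<le> shi * (8 - al ^ 3)" using B' a3 by auto
    show "s * (8 - a ^ 3) \<le> shi * (8 - al ^ 3)" using shi s0 a3 by (intro mult_mono) auto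
    show "0 < al^6" using B' by auto
    show "al^6 \<le> a^6" by (rule a6)
  qed
  moreover have "slo*(8-ah^3)/ah^6 \<le> X" unfolding X_def
  proof (rule frac_le)
    show "0 \<le> s * (8 - a ^ 3)" using s0 a3 by auto
    show "slo * (8 - ah ^ 3) \<le> s * (8 - a ^ 3)" using slo B' a3 by (intro mult_mono) auto
    show "0 < a^6" using a1 by auto
    show "a^6 \<le> ah^6" by (rule a6)
  qed
  ultimately have T1: "min (slo*(8-ah^3)/ah^6 * ((tlo-shi)^3 - ah^3)) (shi*(8-al^3)/al^6 * ((tlo-shi)^3 - ah^3))
      \<le> X * (d^3 - a^3)"
  proof -
    assume h1: "X \<le> shi*(8-al^3)/al^6" and h2: "slo*(8-ah^3)/ah^6 \<le> X"
    have X0: "0 \<le> X" unfolding X_def using s0 a3 by auto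
    show ?thesis
    proof (cases "(tlo-shi)^3 - ah^3 \<ge> 0")
      case True
      have "slo*(8-ah^3)/ah^6 * ((tlo-shi)^3 - ah^3) \<le> X * (d^3 - a^3)"
        using True h2 e1 X0 by (intro mult_mono) auto
      thus ?thesis by simp
    next
      case False
      have "shi*(8-al^3)/al^6 * ((tlo-shi)^3 - ah^3) \<le> X * ((tlo-shi)^3 - ah^3)"
        using False h1 by (intro mult_right_mono_neg) auto
      also have "\<dots> \<le> X * (d^3 - a^3)" using e1 X0 by (intro mult_left_mono) auto
      finally show ?thesis by simp
    qed
  qed
  have b3: "bl^3 \<le> b^3" "8 \<le> bl^3" using b B' power_mono[of 2 bl 3] by (auto intro: power_mono)
  have b6: "b^6 \<le> bh^6" using b B' by (auto intro: power_mono)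
  have "tlo*(bl^3-8)/bh^6 \<le> Y" unfolding Y_def
  proof (rule frac_le)
    show "0 \<le> t * (b ^ 3 - 8)" using tlo B' b3 by auto
    show "tlo * (bl ^ 3 - 8) \<le> t * (b ^ 3 - 8)" using tlo B' b3 by (intro mult_mono) auto
    show "0 < b^6" using b1 by auto
    show "b^6 \<le> bh^6" by (rule b6)
  qed
  moreover have "0 \<le> tlo*(bl^3-8)/bh^6" using B' b3 by auto
  ultimately have Y0: "0 \<le> Y" by linarith
  have T2: "tlo*(bl^3-8)/bh^6 * (bl^3 - (thi - slo)^3) \<le> Y * (b^3 - d^3)"
    using e2 B' b3 Y0 \<open>tlo*(bl^3-8)/bh^6 \<le> Y\<close> by (intro mult_mono) auto
  have c1: "(s-t)^3 = - (d^3)" unfolding d_def by (simp add: power3_eq_cube algebra_simps)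
  have c2: "s * (a^3-8) / a^6 = - X" unfolding X_def by (simp add: algebra_simps diff_divide_distrib)
  have "g a b = (- X) * (- (d^3) + a^3) + Y * (- (d^3) + b^3)"
    unfolding g_def Let_def s_def[symmetric] t_def[symmetric] c1 c2 Y_def by simp
  also have "\<dots> = X * (d^3 - a^3) + Y * (b^3 - d^3)" by (simp add: algebra_simps)
  finally have "g a b = X * (d^3 - a^3) + Y * (b^3 - d^3)" .
  thus ?thesis using T1 T2 B' by linarith
qed

lemma n7: assumes "1 \<le> a" "a \<le> 9/8" "5/2 \<le> b" "b \<le> 171/64" shows "0 < g a b"
  by (rule box[of "1" "9/8" "5/2" "171/64" "0" "33/64" "9385/4096" "10149/4096" a b, OF _ assms]) (simp add: boxok_def power_divide)

lemma n8: assumes "1 \<le> a" "a \<le> 9/8" "171/64 \<le> b" "b \<le> 91/32" shows "0 < g a b"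
  by (rule box[of "1" "9/8" "171/64" "91/32" "0" "33/64" "2537/1024" "10905/4096" a b, OF _ assms]) (simp add: boxok_def power_divide)

lemma n6: assumes "1 \<le> a" "a \<le> 9/8" "5/2 \<le> b" "b \<le> 91/32" shows "0 < g a b"
  using assms n7[of a b] n8[of a b] by (cases "b \<le> 171/64") auto

lemma n9: assumes "9/8 \<le> a" "a \<le> 5/4" "5/2 \<le> b" "b \<le> 91/32" shows "0 < g a b"
  by (rule box[of "9/8" "5/4" "5/2" "91/32" "2111/4096" "3/4" "9385/4096" "10905/4096" a b, OF _ assms]) (simp add: boxok_def power_divide)

lemma n5: assumes "1 \<le> a" "a \<le> 5/4" "5/2 \<le> b" "b \<le> 91/32" shows "0 < g a b"
  using assms n6[of a b] n9[of a b] by (cases "a \<le> 9/8") auto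

lemma n14: assumes "1 \<le> a" "a \<le> 17/16" "91/32 \<le> b" "b \<le> 375/128" shows "0 < g a b"
  by (rule box[of "1" "17/16" "91/32" "375/128" "0" "1471/4096" "1363/512" "705/256" a b, OF _ assms]) (simp add: boxok_def power_divide)

lemma n15: assumes "1 \<le> a" "a \<le> 17/16" "375/128 \<le> b" "b \<le> 193/64" shows "0 < g a b"
  by (rule box[of "1" "17/16" "375/128" "193/64" "0" "1471/4096" "11279/4096" "5827/2048" a b, OF _ assms]) (simp add: boxok_def power_divide)

lemma n13: assumes "1 \<le> a" "a \<le> 17/16" "91/32 \<le> b" "b \<le> 193/64" shows "0 < g a b"
  using assms n14[of a b] n15[of a b] by (cases "b \<le> 375/128") auto

lemma n16: assumes "17/16 \<le> a" "a \<le> 9/8" "91/32 \<le> b" "b \<le> 193/64" shows "0 < g a b"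
  by (rule box[of "17/16" "9/8" "91/32" "193/64" "735/2048" "33/64" "1363/512" "5827/2048" a b, OF _ assms]) (simp add: boxok_def power_divide)

lemma n12: assumes "1 \<le> a" "a \<le> 9/8" "91/32 \<le> b" "b \<le> 193/64" shows "0 < g a b"
  using assms n13[of a b] n16[of a b] by (cases "a \<le> 17/16") auto

lemma n19: assumes "1 \<le> a" "a \<le> 17/16" "193/64 \<le> b" "b \<le> 397/128" shows "0 < g a b"
  by (rule box[of "1" "17/16" "193/64" "397/128" "0" "1471/4096" "11653/4096" "6013/2048" a b, OF _ assms]) (simp add: boxok_def power_divide)

lemma n20: assumes "1 \<le> a" "a \<le> 17/16" "397/128 \<le> b" "b \<le> 51/16" shows "0 < g a b"
  by (rule box[of "1" "17/16" "397/128" "51/16" "0" "1471/4096" "12025/4096" "12397/4096" a b, OF _ assms]) (simp add: boxok_def power_divide)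

lemma n18: assumes "1 \<le> a" "a \<le> 17/16" "193/64 \<le> b" "b \<le> 51/16" shows "0 < g a b"
  using assms n19[of a b] n20[of a b] by (cases "b \<le> 397/128") auto

lemma n21: assumes "17/16 \<le> a" "a \<le> 9/8" "193/64 \<le> b" "b \<le> 51/16" shows "0 < g a b"
  by (rule box[of "17/16" "9/8" "193/64" "51/16" "735/2048" "33/64" "11653/4096" "12397/4096" a b, OF _ assms]) (simp add: boxok_def power_divide)

lemma n17: assumes "1 \<le> a" "a \<le> 9/8" "193/64 \<le> b" "b \<le> 51/16" shows "0 < g a b"
  using assms n18[of a b] n21[of a b] by (cases "a \<le> 17/16") auto

lemma n11: assumes "1 \<le> a" "a \<le> 9/8" "91/32 \<le> b" "b \<le> 51/16" shows "0 < g a b"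
  using assms n12[of a b] n17[of a b] by (cases "b \<le> 193/64") auto

lemma n22: assumes "9/8 \<le> a" "a \<le> 5/4" "91/32 \<le> b" "b \<le> 51/16" shows "0 < g a b"
  by (rule box[of "9/8" "5/4" "91/32" "51/16" "2111/4096" "3/4" "1363/512" "12397/4096" a b, OF _ assms]) (simp add: boxok_def power_divide)

lemma n10: assumes "1 \<le> a" "a \<le> 5/4" "91/32 \<le> b" "b \<le> 51/16" shows "0 < g a b"
  using assms n11[of a b] n22[of a b] by (cases "a \<le> 9/8") auto

lemma n4: assumes "1 \<le> a" "a \<le> 5/4" "5/2 \<le> b" "b \<le> 51/16" shows "0 < g a b"
  using assms n5[of a b] n10[of a b] by (cases "b \<le> 91/32") auto

lemma n25: assumes "5/4 \<le> a" "a \<le> 11/8" "5/2 \<le> b" "b \<le> 91/32" shows "0 < g a b"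
  by (rule box[of "5/4" "11/8" "5/2" "91/32" "3/4" "1933/2048" "9385/4096" "10905/4096" a b, OF _ assms]) (simp add: boxok_def power_divide)

lemma n30: assumes "11/8 \<le> a" "a \<le> 45/32" "5/2 \<le> b" "b \<le> 331/128" shows "0 < g a b"
  by (rule box[of "11/8" "45/32" "5/2" "331/128" "3865/4096" "2025/2048" "9385/4096" "1221/512" a b, OF _ assms]) (simp add: boxok_def power_divide)

lemma n31: assumes "45/32 \<le> a" "a \<le> 23/16" "5/2 \<le> b" "b \<le> 331/128" shows "0 < g a b"
  by (rule box[of "45/32" "23/16" "5/2" "331/128" "4049/4096" "2115/2048" "9385/4096" "1221/512" a b, OF _ assms]) (simp add: boxok_def power_divide)

lemma n29: assumes "11/8 \<le> a" "a \<le> 23/16" "5/2 \<le> b" "b \<le> 331/128" shows "0 < g a b"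
  using assms n30[of a b] n31[of a b] by (cases "a \<le> 45/32") auto

lemma n32: assumes "11/8 \<le> a" "a \<le> 23/16" "331/128 \<le> b" "b \<le> 171/64" shows "0 < g a b"
  by (rule box[of "11/8" "23/16" "331/128" "171/64" "3865/4096" "2115/2048" "9767/4096" "10149/4096" a b, OF _ assms]) (simp add: boxok_def power_divide)

lemma n28: assumes "11/8 \<le> a" "a \<le> 23/16" "5/2 \<le> b" "b \<le> 171/64" shows "0 < g a b"
  using assms n29[of a b] n32[of a b] by (cases "b \<le> 331/128") auto

lemma n36: assumes "23/16 \<le> a" "a \<le> 47/32" "5/2 \<le> b" "b \<le> 651/256" shows "0 < g a b"
  by (rule box[of "23/16" "47/32" "5/2" "651/256" "4229/4096" "4407/4096" "9385/4096" "9577/4096" a b, OF _ assms]) (simp add: boxok_def power_divide)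

lemma n37: assumes "23/16 \<le> a" "a \<le> 47/32" "651/256 \<le> b" "b \<le> 331/128" shows "0 < g a b"
  by (rule box[of "23/16" "47/32" "651/256" "331/128" "4229/4096" "4407/4096" "1197/512" "1221/512" a b, OF _ assms]) (simp add: boxok_def power_divide)

lemma n35: assumes "23/16 \<le> a" "a \<le> 47/32" "5/2 \<le> b" "b \<le> 331/128" shows "0 < g a b"
  using assms n36[of a b] n37[of a b] by (cases "b \<le> 651/256") auto

lemma n40: assumes "47/32 \<le> a" "a \<le> 95/64" "5/2 \<le> b" "b \<le> 651/256" shows "0 < g a b"
  by (rule box[of "47/32" "95/64" "5/2" "651/256" "2203/2048" "2247/2048" "9385/4096" "9577/4096" a b, OF _ assms]) (simp add: boxok_def power_divide)

lemma n41: assumes "95/64 \<le> a" "a \<le> 3/2" "5/2 \<le> b" "b \<le> 651/256" shows "0 < g a b"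
  by (rule box[of "95/64" "3/2" "5/2" "651/256" "4493/4096" "1145/1024" "9385/4096" "9577/4096" a b, OF _ assms]) (simp add: boxok_def power_divide)

lemma n39: assumes "47/32 \<le> a" "a \<le> 3/2" "5/2 \<le> b" "b \<le> 651/256" shows "0 < g a b"
  using assms n40[of a b] n41[of a b] by (cases "a \<le> 95/64") auto

lemma n42: assumes "47/32 \<le> a" "a \<le> 3/2" "651/256 \<le> b" "b \<le> 331/128" shows "0 < g a b"
  by (rule box[of "47/32" "3/2" "651/256" "331/128" "2203/2048" "1145/1024" "1197/512" "1221/512" a b, OF _ assms]) (simp add: boxok_def power_divide)

lemma n38: assumes "47/32 \<le> a" "a \<le> 3/2" "5/2 \<le> b" "b \<le> 331/128" shows "0 < g a b"
  using assms n39[of a b] n42[of a b] by (cases "b \<le> 651/256") auto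

lemma n34: assumes "23/16 \<le> a" "a \<le> 3/2" "5/2 \<le> b" "b \<le> 331/128" shows "0 < g a b"
  using assms n35[of a b] n38[of a b] by (cases "a \<le> 47/32") auto

lemma n43: assumes "23/16 \<le> a" "a \<le> 3/2" "331/128 \<le> b" "b \<le> 171/64" shows "0 < g a b"
  by (rule box[of "23/16" "3/2" "331/128" "171/64" "4229/4096" "1145/1024" "9767/4096" "10149/4096" a b, OF _ assms]) (simp add: boxok_def power_divide)

lemma n33: assumes "23/16 \<le> a" "a \<le> 3/2" "5/2 \<le> b" "b \<le> 171/64" shows "0 < g a b"
  using assms n34[of a b] n43[of a b] by (cases "b \<le> 331/128") auto

lemma n27: assumes "11/8 \<le> a" "a \<le> 3/2" "5/2 \<le> b" "b \<le> 171/64" shows "0 < g a b"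
  using assms n28[of a b] n33[of a b] by (cases "a \<le> 23/16") auto

lemma n45: assumes "11/8 \<le> a" "a \<le> 23/16" "171/64 \<le> b" "b \<le> 91/32" shows "0 < g a b"
  by (rule box[of "11/8" "23/16" "171/64" "91/32" "3865/4096" "2115/2048" "2537/1024" "10905/4096" a b, OF _ assms]) (simp add: boxok_def power_divide)

lemma n46: assumes "23/16 \<le> a" "a \<le> 3/2" "171/64 \<le> b" "b \<le> 91/32" shows "0 < g a b"
  by (rule box[of "23/16" "3/2" "171/64" "91/32" "4229/4096" "1145/1024" "2537/1024" "10905/4096" a b, OF _ assms]) (simp add: boxok_def power_divide)

lemma n44: assumes "11/8 \<le> a" "a \<le> 3/2" "171/64 \<le> b" "b \<le> 91/32" shows "0 < g a b"
  using assms n45[of a b] n46[of a b] by (cases "a \<le> 23/16") auto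

lemma n26: assumes "11/8 \<le> a" "a \<le> 3/2" "5/2 \<le> b" "b \<le> 91/32" shows "0 < g a b"
  using assms n27[of a b] n44[of a b] by (cases "b \<le> 171/64") auto

lemma n24: assumes "5/4 \<le> a" "a \<le> 3/2" "5/2 \<le> b" "b \<le> 91/32" shows "0 < g a b"
  using assms n25[of a b] n26[of a b] by (cases "a \<le> 11/8") auto

lemma n47: assumes "5/4 \<le> a" "a \<le> 3/2" "91/32 \<le> b" "b \<le> 51/16" shows "0 < g a b"
  by (rule box[of "5/4" "3/2" "91/32" "51/16" "3/4" "1145/1024" "1363/512" "12397/4096" a b, OF _ assms]) (simp add: boxok_def power_divide)

lemma n23: assumes "5/4 \<le> a" "a \<le> 3/2" "5/2 \<le> b" "b \<le> 51/16" shows "0 < g a b"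
  using assms n24[of a b] n47[of a b] by (cases "b \<le> 91/32") auto

lemma n3: assumes "1 \<le> a" "a \<le> 3/2" "5/2 \<le> b" "b \<le> 51/16" shows "0 < g a b"
  using assms n4[of a b] n23[of a b] by (cases "a \<le> 5/4") auto

lemma n54: assumes "1 \<le> a" "a \<le> 17/16" "51/16 \<le> b" "b \<le> 419/128" shows "0 < g a b"
  by (rule box[of "1" "17/16" "51/16" "419/128" "0" "1471/4096" "3099/1024" "399/128" a b, OF _ assms]) (simp add: boxok_def power_divide)

lemma n55: assumes "1 \<le> a" "a \<le> 17/16" "419/128 \<le> b" "b \<le> 215/64" shows "0 < g a b"
  by (rule box[of "1" "17/16" "419/128" "215/64" "0" "1471/4096" "12767/4096" "13137/4096" a b, OF _ assms]) (simp add: boxok_def power_divide)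

lemma n53: assumes "1 \<le> a" "a \<le> 17/16" "51/16 \<le> b" "b \<le> 215/64" shows "0 < g a b"
  using assms n54[of a b] n55[of a b] by (cases "b \<le> 419/128") auto

lemma n56: assumes "17/16 \<le> a" "a \<le> 9/8" "51/16 \<le> b" "b \<le> 215/64" shows "0 < g a b"
  by (rule box[of "17/16" "9/8" "51/16" "215/64" "735/2048" "33/64" "3099/1024" "13137/4096" a b, OF _ assms]) (simp add: boxok_def power_divide)

lemma n52: assumes "1 \<le> a" "a \<le> 9/8" "51/16 \<le> b" "b \<le> 215/64" shows "0 < g a b"
  using assms n53[of a b] n56[of a b] by (cases "a \<le> 17/16") auto

lemma n59: assumes "1 \<le> a" "a \<le> 17/16" "215/64 \<le> b" "b \<le> 441/128" shows "0 < g a b"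
  by (rule box[of "1" "17/16" "215/64" "441/128" "0" "1471/4096" "821/256" "13505/4096" a b, OF _ assms]) (simp add: boxok_def power_divide)

lemma n60: assumes "1 \<le> a" "a \<le> 17/16" "441/128 \<le> b" "b \<le> 113/32" shows "0 < g a b"
  by (rule box[of "1" "17/16" "441/128" "113/32" "0" "1471/4096" "211/64" "867/256" a b, OF _ assms]) (simp add: boxok_def power_divide)

lemma n58: assumes "1 \<le> a" "a \<le> 17/16" "215/64 \<le> b" "b \<le> 113/32" shows "0 < g a b"
  using assms n59[of a b] n60[of a b] by (cases "b \<le> 441/128") auto

lemma n61: assumes "17/16 \<le> a" "a \<le> 9/8" "215/64 \<le> b" "b \<le> 113/32" shows "0 < g a b"
  by (rule box[of "17/16" "9/8" "215/64" "113/32" "735/2048" "33/64" "821/256" "867/256" a b, OF _ assms]) (simp add: boxok_def power_divide)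

lemma n57: assumes "1 \<le> a" "a \<le> 9/8" "215/64 \<le> b" "b \<le> 113/32" shows "0 < g a b"
  using assms n58[of a b] n61[of a b] by (cases "a \<le> 17/16") auto

lemma n51: assumes "1 \<le> a" "a \<le> 9/8" "51/16 \<le> b" "b \<le> 113/32" shows "0 < g a b"
  using assms n52[of a b] n57[of a b] by (cases "b \<le> 215/64") auto

lemma n62: assumes "9/8 \<le> a" "a \<le> 5/4" "51/16 \<le> b" "b \<le> 113/32" shows "0 < g a b"
  by (rule box[of "9/8" "5/4" "51/16" "113/32" "2111/4096" "3/4" "3099/1024" "867/256" a b, OF _ assms]) (simp add: boxok_def power_divide)

lemma n50: assumes "1 \<le> a" "a \<le> 5/4" "51/16 \<le> b" "b \<le> 113/32" shows "0 < g a b"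
  using assms n51[of a b] n62[of a b] by (cases "a \<le> 9/8") auto

lemma n67: assumes "1 \<le> a" "a \<le> 17/16" "113/32 \<le> b" "b \<le> 463/128" shows "0 < g a b"
  by (rule box[of "1" "17/16" "113/32" "463/128" "0" "1471/4096" "13871/4096" "14239/4096" a b, OF _ assms]) (simp add: boxok_def power_divide)

lemma n68: assumes "1 \<le> a" "a \<le> 17/16" "463/128 \<le> b" "b \<le> 237/64" shows "0 < g a b"
  by (rule box[of "1" "17/16" "463/128" "237/64" "0" "1471/4096" "7119/2048" "14605/4096" a b, OF _ assms]) (simp add: boxok_def power_divide)

lemma n66: assumes "1 \<le> a" "a \<le> 17/16" "113/32 \<le> b" "b \<le> 237/64" shows "0 < g a b"
  using assms n67[of a b] n68[of a b] by (cases "b \<le> 463/128") auto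

lemma n69: assumes "17/16 \<le> a" "a \<le> 9/8" "113/32 \<le> b" "b \<le> 237/64" shows "0 < g a b"
  by (rule box[of "17/16" "9/8" "113/32" "237/64" "735/2048" "33/64" "13871/4096" "14605/4096" a b, OF _ assms]) (simp add: boxok_def power_divide)

lemma n65: assumes "1 \<le> a" "a \<le> 9/8" "113/32 \<le> b" "b \<le> 237/64" shows "0 < g a b"
  using assms n66[of a b] n69[of a b] by (cases "a \<le> 17/16") auto

lemma n72: assumes "1 \<le> a" "a \<le> 17/16" "237/64 \<le> b" "b \<le> 485/128" shows "0 < g a b"
  by (rule box[of "1" "17/16" "237/64" "485/128" "0" "1471/4096" "3651/1024" "7485/2048" a b, OF _ assms]) (simp add: boxok_def power_divide)

lemma n73: assumes "1 \<le> a" "a \<le> 17/16" "485/128 \<le> b" "b \<le> 31/8" shows "0 < g a b"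
  by (rule box[of "1" "17/16" "485/128" "31/8" "0" "1471/4096" "14969/4096" "15335/4096" a b, OF _ assms]) (simp add: boxok_def power_divide)

lemma n71: assumes "1 \<le> a" "a \<le> 17/16" "237/64 \<le> b" "b \<le> 31/8" shows "0 < g a b"
  using assms n72[of a b] n73[of a b] by (cases "b \<le> 485/128") auto

lemma n74: assumes "17/16 \<le> a" "a \<le> 9/8" "237/64 \<le> b" "b \<le> 31/8" shows "0 < g a b"
  by (rule box[of "17/16" "9/8" "237/64" "31/8" "735/2048" "33/64" "3651/1024" "15335/4096" a b, OF _ assms]) (simp add: boxok_def power_divide)

lemma n70: assumes "1 \<le> a" "a \<le> 9/8" "237/64 \<le> b" "b \<le> 31/8" shows "0 < g a b"
  using assms n71[of a b] n74[of a b] by (cases "a \<le> 17/16") auto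

lemma n64: assumes "1 \<le> a" "a \<le> 9/8" "113/32 \<le> b" "b \<le> 31/8" shows "0 < g a b"
  using assms n65[of a b] n70[of a b] by (cases "b \<le> 237/64") auto

lemma n75: assumes "9/8 \<le> a" "a \<le> 5/4" "113/32 \<le> b" "b \<le> 31/8" shows "0 < g a b"
  by (rule box[of "9/8" "5/4" "113/32" "31/8" "2111/4096" "3/4" "13871/4096" "15335/4096" a b, OF _ assms]) (simp add: boxok_def power_divide)

lemma n63: assumes "1 \<le> a" "a \<le> 5/4" "113/32 \<le> b" "b \<le> 31/8" shows "0 < g a b"
  using assms n64[of a b] n75[of a b] by (cases "a \<le> 9/8") auto

lemma n49: assumes "1 \<le> a" "a \<le> 5/4" "51/16 \<le> b" "b \<le> 31/8" shows "0 < g a b"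
  using assms n50[of a b] n63[of a b] by (cases "b \<le> 113/32") auto

lemma n76: assumes "5/4 \<le> a" "a \<le> 3/2" "51/16 \<le> b" "b \<le> 31/8" shows "0 < g a b"
  by (rule box[of "5/4" "3/2" "51/16" "31/8" "3/4" "1145/1024" "3099/1024" "15335/4096" a b, OF _ assms]) (simp add: boxok_def power_divide)

lemma n48: assumes "1 \<le> a" "a \<le> 3/2" "51/16 \<le> b" "b \<le> 31/8" shows "0 < g a b"
  using assms n49[of a b] n76[of a b] by (cases "a \<le> 5/4") auto

lemma n2: assumes "1 \<le> a" "a \<le> 3/2" "5/2 \<le> b" "b \<le> 31/8" shows "0 < g a b"
  using assms n3[of a b] n48[of a b] by (cases "b \<le> 51/16") auto

lemma n88: assumes "3/2 \<le> a" "a \<le> 97/64" "5/2 \<le> b" "b \<le> 1291/512" shows "0 < g a b"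
  by (rule box[of "3/2" "97/64" "5/2" "1291/512" "4579/4096" "4665/4096" "9385/4096" "4741/2048" a b, OF _ assms]) (simp add: boxok_def power_divide)

lemma n89: assumes "3/2 \<le> a" "a \<le> 97/64" "1291/512 \<le> b" "b \<le> 651/256" shows "0 < g a b"
  by (rule box[of "3/2" "97/64" "1291/512" "651/256" "4579/4096" "4665/4096" "9481/4096" "9577/4096" a b, OF _ assms]) (simp add: boxok_def power_divide)

lemma n87: assumes "3/2 \<le> a" "a \<le> 97/64" "5/2 \<le> b" "b \<le> 651/256" shows "0 < g a b"
  using assms n88[of a b] n89[of a b] by (cases "b \<le> 1291/512") auto

lemma n91: assumes "97/64 \<le> a" "a \<le> 49/32" "5/2 \<le> b" "b \<le> 1291/512" shows "0 < g a b"
  by (rule box[of "97/64" "49/32" "5/2" "1291/512" "583/512" "2375/2048" "9385/4096" "4741/2048" a b, OF _ assms]) (simp add: boxok_def power_divide)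

lemma n92: assumes "97/64 \<le> a" "a \<le> 49/32" "1291/512 \<le> b" "b \<le> 651/256" shows "0 < g a b"
  by (rule box[of "97/64" "49/32" "1291/512" "651/256" "583/512" "2375/2048" "9481/4096" "9577/4096" a b, OF _ assms]) (simp add: boxok_def power_divide)

lemma n90: assumes "97/64 \<le> a" "a \<le> 49/32" "5/2 \<le> b" "b \<le> 651/256" shows "0 < g a b"
  using assms n91[of a b] n92[of a b] by (cases "b \<le> 1291/512") auto

lemma n86: assumes "3/2 \<le> a" "a \<le> 49/32" "5/2 \<le> b" "b \<le> 651/256" shows "0 < g a b"
  using assms n87[of a b] n90[of a b] by (cases "a \<le> 97/64") auto

lemma n93: assumes "3/2 \<le> a" "a \<le> 49/32" "651/256 \<le> b" "b \<le> 331/128" shows "0 < g a b"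
  by (rule box[of "3/2" "49/32" "651/256" "331/128" "4579/4096" "2375/2048" "1197/512" "1221/512" a b, OF _ assms]) (simp add: boxok_def power_divide)

lemma n85: assumes "3/2 \<le> a" "a \<le> 49/32" "5/2 \<le> b" "b \<le> 331/128" shows "0 < g a b"
  using assms n86[of a b] n93[of a b] by (cases "b \<le> 651/256") auto

lemma n97: assumes "49/32 \<le> a" "a \<le> 99/64" "5/2 \<le> b" "b \<le> 1291/512" shows "0 < g a b"
  by (rule box[of "49/32" "99/64" "5/2" "1291/512" "4749/4096" "4835/4096" "9385/4096" "4741/2048" a b, OF _ assms]) (simp add: boxok_def power_divide)

lemma n98: assumes "49/32 \<le> a" "a \<le> 99/64" "1291/512 \<le> b" "b \<le> 651/256" shows "0 < g a b"
  by (rule box[of "49/32" "99/64" "1291/512" "651/256" "4749/4096" "4835/4096" "9481/4096" "9577/4096" a b, OF _ assms]) (simp add: boxok_def power_divide)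

lemma n96: assumes "49/32 \<le> a" "a \<le> 99/64" "5/2 \<le> b" "b \<le> 651/256" shows "0 < g a b"
  using assms n97[of a b] n98[of a b] by (cases "b \<le> 1291/512") auto

lemma n100: assumes "99/64 \<le> a" "a \<le> 25/16" "5/2 \<le> b" "b \<le> 1291/512" shows "0 < g a b"
  by (rule box[of "99/64" "25/16" "5/2" "1291/512" "2417/2048" "2459/2048" "9385/4096" "4741/2048" a b, OF _ assms]) (simp add: boxok_def power_divide)

lemma n101: assumes "99/64 \<le> a" "a \<le> 25/16" "1291/512 \<le> b" "b \<le> 651/256" shows "0 < g a b"
  by (rule box[of "99/64" "25/16" "1291/512" "651/256" "2417/2048" "2459/2048" "9481/4096" "9577/4096" a b, OF _ assms]) (simp add: boxok_def power_divide)

lemma n99: assumes "99/64 \<le> a" "a \<le> 25/16" "5/2 \<le> b" "b \<le> 651/256" shows "0 < g a b"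
  using assms n100[of a b] n101[of a b] by (cases "b \<le> 1291/512") auto

lemma n95: assumes "49/32 \<le> a" "a \<le> 25/16" "5/2 \<le> b" "b \<le> 651/256" shows "0 < g a b"
  using assms n96[of a b] n99[of a b] by (cases "a \<le> 99/64") auto

lemma n102: assumes "49/32 \<le> a" "a \<le> 25/16" "651/256 \<le> b" "b \<le> 331/128" shows "0 < g a b"
  by (rule box[of "49/32" "25/16" "651/256" "331/128" "4749/4096" "2459/2048" "1197/512" "1221/512" a b, OF _ assms]) (simp add: boxok_def power_divide)

lemma n94: assumes "49/32 \<le> a" "a \<le> 25/16" "5/2 \<le> b" "b \<le> 331/128" shows "0 < g a b"
  using assms n95[of a b] n102[of a b] by (cases "b \<le> 651/256") auto

lemma n84: assumes "3/2 \<le> a" "a \<le> 25/16" "5/2 \<le> b" "b \<le> 331/128" shows "0 < g a b"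
  using assms n85[of a b] n94[of a b] by (cases "a \<le> 49/32") auto

lemma n104: assumes "3/2 \<le> a" "a \<le> 49/32" "331/128 \<le> b" "b \<le> 171/64" shows "0 < g a b"
  by (rule box[of "3/2" "49/32" "331/128" "171/64" "4579/4096" "2375/2048" "9767/4096" "10149/4096" a b, OF _ assms]) (simp add: boxok_def power_divide)

lemma n105: assumes "49/32 \<le> a" "a \<le> 25/16" "331/128 \<le> b" "b \<le> 171/64" shows "0 < g a b"
  by (rule box[of "49/32" "25/16" "331/128" "171/64" "4749/4096" "2459/2048" "9767/4096" "10149/4096" a b, OF _ assms]) (simp add: boxok_def power_divide)

lemma n103: assumes "3/2 \<le> a" "a \<le> 25/16" "331/128 \<le> b" "b \<le> 171/64" shows "0 < g a b"
  using assms n104[of a b] n105[of a b] by (cases "a \<le> 49/32") auto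

lemma n83: assumes "3/2 \<le> a" "a \<le> 25/16" "5/2 \<le> b" "b \<le> 171/64" shows "0 < g a b"
  using assms n84[of a b] n103[of a b] by (cases "b \<le> 331/128") auto

lemma n111: assumes "25/16 \<le> a" "a \<le> 101/64" "5/2 \<le> b" "b \<le> 1291/512" shows "0 < g a b"
  by (rule box[of "25/16" "101/64" "5/2" "1291/512" "4917/4096" "5001/4096" "9385/4096" "4741/2048" a b, OF _ assms]) (simp add: boxok_def power_divide)

lemma n112: assumes "25/16 \<le> a" "a \<le> 101/64" "1291/512 \<le> b" "b \<le> 651/256" shows "0 < g a b"
  by (rule box[of "25/16" "101/64" "1291/512" "651/256" "4917/4096" "5001/4096" "9481/4096" "9577/4096" a b, OF _ assms]) (simp add: boxok_def power_divide)

lemma n110: assumes "25/16 \<le> a" "a \<le> 101/64" "5/2 \<le> b" "b \<le> 651/256" shows "0 < g a b"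
  using assms n111[of a b] n112[of a b] by (cases "b \<le> 1291/512") auto

lemma n114: assumes "101/64 \<le> a" "a \<le> 51/32" "5/2 \<le> b" "b \<le> 1291/512" shows "0 < g a b"
  by (rule box[of "101/64" "51/32" "5/2" "1291/512" "625/512" "1271/1024" "9385/4096" "4741/2048" a b, OF _ assms]) (simp add: boxok_def power_divide)

lemma n115: assumes "101/64 \<le> a" "a \<le> 51/32" "1291/512 \<le> b" "b \<le> 651/256" shows "0 < g a b"
  by (rule box[of "101/64" "51/32" "1291/512" "651/256" "625/512" "1271/1024" "9481/4096" "9577/4096" a b, OF _ assms]) (simp add: boxok_def power_divide)

lemma n113: assumes "101/64 \<le> a" "a \<le> 51/32" "5/2 \<le> b" "b \<le> 651/256" shows "0 < g a b"
  using assms n114[of a b] n115[of a b] by (cases "b \<le> 1291/512") auto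

lemma n109: assumes "25/16 \<le> a" "a \<le> 51/32" "5/2 \<le> b" "b \<le> 651/256" shows "0 < g a b"
  using assms n110[of a b] n113[of a b] by (cases "a \<le> 101/64") auto

lemma n116: assumes "25/16 \<le> a" "a \<le> 51/32" "651/256 \<le> b" "b \<le> 331/128" shows "0 < g a b"
  by (rule box[of "25/16" "51/32" "651/256" "331/128" "4917/4096" "1271/1024" "1197/512" "1221/512" a b, OF _ assms]) (simp add: boxok_def power_divide)

lemma n108: assumes "25/16 \<le> a" "a \<le> 51/32" "5/2 \<le> b" "b \<le> 331/128" shows "0 < g a b"
  using assms n109[of a b] n116[of a b] by (cases "b \<le> 651/256") auto

lemma n120: assumes "51/32 \<le> a" "a \<le> 103/64" "5/2 \<le> b" "b \<le> 1291/512" shows "0 < g a b"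
  by (rule box[of "51/32" "103/64" "5/2" "1291/512" "5083/4096" "2583/2048" "9385/4096" "4741/2048" a b, OF _ assms]) (simp add: boxok_def power_divide)

lemma n121: assumes "51/32 \<le> a" "a \<le> 103/64" "1291/512 \<le> b" "b \<le> 651/256" shows "0 < g a b"
  by (rule box[of "51/32" "103/64" "1291/512" "651/256" "5083/4096" "2583/2048" "9481/4096" "9577/4096" a b, OF _ assms]) (simp add: boxok_def power_divide)

lemma n119: assumes "51/32 \<le> a" "a \<le> 103/64" "5/2 \<le> b" "b \<le> 651/256" shows "0 < g a b"
  using assms n120[of a b] n121[of a b] by (cases "b \<le> 1291/512") auto

lemma n122: assumes "103/64 \<le> a" "a \<le> 13/8" "5/2 \<le> b" "b \<le> 651/256" shows "0 < g a b"
  by (rule box[of "103/64" "13/8" "5/2" "651/256" "5165/4096" "5247/4096" "9385/4096" "9577/4096" a b, OF _ assms]) (simp add: boxok_def power_divide)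

lemma n118: assumes "51/32 \<le> a" "a \<le> 13/8" "5/2 \<le> b" "b \<le> 651/256" shows "0 < g a b"
  using assms n119[of a b] n122[of a b] by (cases "a \<le> 103/64") auto

lemma n123: assumes "51/32 \<le> a" "a \<le> 13/8" "651/256 \<le> b" "b \<le> 331/128" shows "0 < g a b"
  by (rule box[of "51/32" "13/8" "651/256" "331/128" "5083/4096" "5247/4096" "1197/512" "1221/512" a b, OF _ assms]) (simp add: boxok_def power_divide)

lemma n117: assumes "51/32 \<le> a" "a \<le> 13/8" "5/2 \<le> b" "b \<le> 331/128" shows "0 < g a b"
  using assms n118[of a b] n123[of a b] by (cases "b \<le> 651/256") auto

lemma n107: assumes "25/16 \<le> a" "a \<le> 13/8" "5/2 \<le> b" "b \<le> 331/128" shows "0 < g a b"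
  using assms n108[of a b] n117[of a b] by (cases "a \<le> 51/32") auto

lemma n125: assumes "25/16 \<le> a" "a \<le> 51/32" "331/128 \<le> b" "b \<le> 171/64" shows "0 < g a b"
  by (rule box[of "25/16" "51/32" "331/128" "171/64" "4917/4096" "1271/1024" "9767/4096" "10149/4096" a b, OF _ assms]) (simp add: boxok_def power_divide)

lemma n126: assumes "51/32 \<le> a" "a \<le> 13/8" "331/128 \<le> b" "b \<le> 171/64" shows "0 < g a b"
  by (rule box[of "51/32" "13/8" "331/128" "171/64" "5083/4096" "5247/4096" "9767/4096" "10149/4096" a b, OF _ assms]) (simp add: boxok_def power_divide)

lemma n124: assumes "25/16 \<le> a" "a \<le> 13/8" "331/128 \<le> b" "b \<le> 171/64" shows "0 < g a b"
  using assms n125[of a b] n126[of a b] by (cases "a \<le> 51/32") auto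

lemma n106: assumes "25/16 \<le> a" "a \<le> 13/8" "5/2 \<le> b" "b \<le> 171/64" shows "0 < g a b"
  using assms n107[of a b] n124[of a b] by (cases "b \<le> 331/128") auto

lemma n82: assumes "3/2 \<le> a" "a \<le> 13/8" "5/2 \<le> b" "b \<le> 171/64" shows "0 < g a b"
  using assms n83[of a b] n106[of a b] by (cases "a \<le> 25/16") auto

lemma n129: assumes "3/2 \<le> a" "a \<le> 25/16" "171/64 \<le> b" "b \<le> 353/128" shows "0 < g a b"
  by (rule box[of "3/2" "25/16" "171/64" "353/128" "4579/4096" "2459/2048" "2537/1024" "329/128" a b, OF _ assms]) (simp add: boxok_def power_divide)

lemma n130: assumes "3/2 \<le> a" "a \<le> 25/16" "353/128 \<le> b" "b \<le> 91/32" shows "0 < g a b"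
  by (rule box[of "3/2" "25/16" "353/128" "91/32" "4579/4096" "2459/2048" "10527/4096" "10905/4096" a b, OF _ assms]) (simp add: boxok_def power_divide)

lemma n128: assumes "3/2 \<le> a" "a \<le> 25/16" "171/64 \<le> b" "b \<le> 91/32" shows "0 < g a b"
  using assms n129[of a b] n130[of a b] by (cases "b \<le> 353/128") auto

lemma n132: assumes "25/16 \<le> a" "a \<le> 13/8" "171/64 \<le> b" "b \<le> 353/128" shows "0 < g a b"
  by (rule box[of "25/16" "13/8" "171/64" "353/128" "4917/4096" "5247/4096" "2537/1024" "329/128" a b, OF _ assms]) (simp add: boxok_def power_divide)

lemma n133: assumes "25/16 \<le> a" "a \<le> 13/8" "353/128 \<le> b" "b \<le> 91/32" shows "0 < g a b"
  by (rule box[of "25/16" "13/8" "353/128" "91/32" "4917/4096" "5247/4096" "10527/4096" "10905/4096" a b, OF _ assms]) (simp add: boxok_def power_divide)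

lemma n131: assumes "25/16 \<le> a" "a \<le> 13/8" "171/64 \<le> b" "b \<le> 91/32" shows "0 < g a b"
  using assms n132[of a b] n133[of a b] by (cases "b \<le> 353/128") auto

lemma n127: assumes "3/2 \<le> a" "a \<le> 13/8" "171/64 \<le> b" "b \<le> 91/32" shows "0 < g a b"
  using assms n128[of a b] n131[of a b] by (cases "a \<le> 25/16") auto

lemma n81: assumes "3/2 \<le> a" "a \<le> 13/8" "5/2 \<le> b" "b \<le> 91/32" shows "0 < g a b"
  using assms n82[of a b] n127[of a b] by (cases "b \<le> 171/64") auto

lemma n140: assumes "13/8 \<le> a" "a \<le> 105/64" "5/2 \<le> b" "b \<le> 651/256" shows "0 < g a b"
  by (rule box[of "13/8" "105/64" "5/2" "651/256" "2623/2048" "333/256" "9385/4096" "9577/4096" a b, OF _ assms]) (simp add: boxok_def power_divide)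

lemma n141: assumes "105/64 \<le> a" "a \<le> 53/32" "5/2 \<le> b" "b \<le> 651/256" shows "0 < g a b"
  by (rule box[of "105/64" "53/32" "5/2" "651/256" "5327/4096" "169/128" "9385/4096" "9577/4096" a b, OF _ assms]) (simp add: boxok_def power_divide)

lemma n139: assumes "13/8 \<le> a" "a \<le> 53/32" "5/2 \<le> b" "b \<le> 651/256" shows "0 < g a b"
  using assms n140[of a b] n141[of a b] by (cases "a \<le> 105/64") auto

lemma n142: assumes "13/8 \<le> a" "a \<le> 53/32" "651/256 \<le> b" "b \<le> 331/128" shows "0 < g a b"
  by (rule box[of "13/8" "53/32" "651/256" "331/128" "2623/2048" "169/128" "1197/512" "1221/512" a b, OF _ assms]) (simp add: boxok_def power_divide)

lemma n138: assumes "13/8 \<le> a" "a \<le> 53/32" "5/2 \<le> b" "b \<le> 331/128" shows "0 < g a b"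
  using assms n139[of a b] n142[of a b] by (cases "b \<le> 651/256") auto

lemma n144: assumes "53/32 \<le> a" "a \<le> 27/16" "5/2 \<le> b" "b \<le> 651/256" shows "0 < g a b"
  by (rule box[of "53/32" "27/16" "5/2" "651/256" "5407/4096" "87/64" "9385/4096" "9577/4096" a b, OF _ assms]) (simp add: boxok_def power_divide)

lemma n145: assumes "53/32 \<le> a" "a \<le> 27/16" "651/256 \<le> b" "b \<le> 331/128" shows "0 < g a b"
  by (rule box[of "53/32" "27/16" "651/256" "331/128" "5407/4096" "87/64" "1197/512" "1221/512" a b, OF _ assms]) (simp add: boxok_def power_divide)

lemma n143: assumes "53/32 \<le> a" "a \<le> 27/16" "5/2 \<le> b" "b \<le> 331/128" shows "0 < g a b"
  using assms n144[of a b] n145[of a b] by (cases "b \<le> 651/256") auto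

lemma n137: assumes "13/8 \<le> a" "a \<le> 27/16" "5/2 \<le> b" "b \<le> 331/128" shows "0 < g a b"
  using assms n138[of a b] n143[of a b] by (cases "a \<le> 53/32") auto

lemma n147: assumes "13/8 \<le> a" "a \<le> 53/32" "331/128 \<le> b" "b \<le> 171/64" shows "0 < g a b"
  by (rule box[of "13/8" "53/32" "331/128" "171/64" "2623/2048" "169/128" "9767/4096" "10149/4096" a b, OF _ assms]) (simp add: boxok_def power_divide)

lemma n148: assumes "53/32 \<le> a" "a \<le> 27/16" "331/128 \<le> b" "b \<le> 171/64" shows "0 < g a b"
  by (rule box[of "53/32" "27/16" "331/128" "171/64" "5407/4096" "87/64" "9767/4096" "10149/4096" a b, OF _ assms]) (simp add: boxok_def power_divide)

lemma n146: assumes "13/8 \<le> a" "a \<le> 27/16" "331/128 \<le> b" "b \<le> 171/64" shows "0 < g a b"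
  using assms n147[of a b] n148[of a b] by (cases "a \<le> 53/32") auto

lemma n136: assumes "13/8 \<le> a" "a \<le> 27/16" "5/2 \<le> b" "b \<le> 171/64" shows "0 < g a b"
  using assms n137[of a b] n146[of a b] by (cases "b \<le> 331/128") auto

lemma n151: assumes "27/16 \<le> a" "a \<le> 55/32" "5/2 \<le> b" "b \<le> 331/128" shows "0 < g a b"
  by (rule box[of "27/16" "55/32" "5/2" "331/128" "5567/4096" "2863/2048" "9385/4096" "1221/512" a b, OF _ assms]) (simp add: boxok_def power_divide)

lemma n152: assumes "55/32 \<le> a" "a \<le> 7/4" "5/2 \<le> b" "b \<le> 331/128" shows "0 < g a b"
  by (rule box[of "55/32" "7/4" "5/2" "331/128" "5725/4096" "5883/4096" "9385/4096" "1221/512" a b, OF _ assms]) (simp add: boxok_def power_divide)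

lemma n150: assumes "27/16 \<le> a" "a \<le> 7/4" "5/2 \<le> b" "b \<le> 331/128" shows "0 < g a b"
  using assms n151[of a b] n152[of a b] by (cases "a \<le> 55/32") auto

lemma n153: assumes "27/16 \<le> a" "a \<le> 7/4" "331/128 \<le> b" "b \<le> 171/64" shows "0 < g a b"
  by (rule box[of "27/16" "7/4" "331/128" "171/64" "5567/4096" "5883/4096" "9767/4096" "10149/4096" a b, OF _ assms]) (simp add: boxok_def power_divide)

lemma n149: assumes "27/16 \<le> a" "a \<le> 7/4" "5/2 \<le> b" "b \<le> 171/64" shows "0 < g a b"
  using assms n150[of a b] n153[of a b] by (cases "b \<le> 331/128") auto

lemma n135: assumes "13/8 \<le> a" "a \<le> 7/4" "5/2 \<le> b" "b \<le> 171/64" shows "0 < g a b"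
  using assms n136[of a b] n149[of a b] by (cases "a \<le> 27/16") auto

lemma n156: assumes "13/8 \<le> a" "a \<le> 27/16" "171/64 \<le> b" "b \<le> 353/128" shows "0 < g a b"
  by (rule box[of "13/8" "27/16" "171/64" "353/128" "2623/2048" "87/64" "2537/1024" "329/128" a b, OF _ assms]) (simp add: boxok_def power_divide)

lemma n157: assumes "13/8 \<le> a" "a \<le> 27/16" "353/128 \<le> b" "b \<le> 91/32" shows "0 < g a b"
  by (rule box[of "13/8" "27/16" "353/128" "91/32" "2623/2048" "87/64" "10527/4096" "10905/4096" a b, OF _ assms]) (simp add: boxok_def power_divide)

lemma n155: assumes "13/8 \<le> a" "a \<le> 27/16" "171/64 \<le> b" "b \<le> 91/32" shows "0 < g a b"
  using assms n156[of a b] n157[of a b] by (cases "b \<le> 353/128") auto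

lemma n158: assumes "27/16 \<le> a" "a \<le> 7/4" "171/64 \<le> b" "b \<le> 91/32" shows "0 < g a b"
  by (rule box[of "27/16" "7/4" "171/64" "91/32" "5567/4096" "5883/4096" "2537/1024" "10905/4096" a b, OF _ assms]) (simp add: boxok_def power_divide)

lemma n154: assumes "13/8 \<le> a" "a \<le> 7/4" "171/64 \<le> b" "b \<le> 91/32" shows "0 < g a b"
  using assms n155[of a b] n158[of a b] by (cases "a \<le> 27/16") auto

lemma n134: assumes "13/8 \<le> a" "a \<le> 7/4" "5/2 \<le> b" "b \<le> 91/32" shows "0 < g a b"
  using assms n135[of a b] n154[of a b] by (cases "b \<le> 171/64") auto

lemma n80: assumes "3/2 \<le> a" "a \<le> 7/4" "5/2 \<le> b" "b \<le> 91/32" shows "0 < g a b"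
  using assms n81[of a b] n134[of a b] by (cases "a \<le> 13/8") auto

lemma n161: assumes "3/2 \<le> a" "a \<le> 13/8" "91/32 \<le> b" "b \<le> 193/64" shows "0 < g a b"
  by (rule box[of "3/2" "13/8" "91/32" "193/64" "4579/4096" "5247/4096" "1363/512" "5827/2048" a b, OF _ assms]) (simp add: boxok_def power_divide)

lemma n162: assumes "3/2 \<le> a" "a \<le> 13/8" "193/64 \<le> b" "b \<le> 51/16" shows "0 < g a b"
  by (rule box[of "3/2" "13/8" "193/64" "51/16" "4579/4096" "5247/4096" "11653/4096" "12397/4096" a b, OF _ assms]) (simp add: boxok_def power_divide)

lemma n160: assumes "3/2 \<le> a" "a \<le> 13/8" "91/32 \<le> b" "b \<le> 51/16" shows "0 < g a b"
  using assms n161[of a b] n162[of a b] by (cases "b \<le> 193/64") auto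

lemma n165: assumes "13/8 \<le> a" "a \<le> 27/16" "91/32 \<le> b" "b \<le> 193/64" shows "0 < g a b"
  by (rule box[of "13/8" "27/16" "91/32" "193/64" "2623/2048" "87/64" "1363/512" "5827/2048" a b, OF _ assms]) (simp add: boxok_def power_divide)

lemma n166: assumes "27/16 \<le> a" "a \<le> 7/4" "91/32 \<le> b" "b \<le> 193/64" shows "0 < g a b"
  by (rule box[of "27/16" "7/4" "91/32" "193/64" "5567/4096" "5883/4096" "1363/512" "5827/2048" a b, OF _ assms]) (simp add: boxok_def power_divide)

lemma n164: assumes "13/8 \<le> a" "a \<le> 7/4" "91/32 \<le> b" "b \<le> 193/64" shows "0 < g a b"
  using assms n165[of a b] n166[of a b] by (cases "a \<le> 27/16") auto

lemma n167: assumes "13/8 \<le> a" "a \<le> 7/4" "193/64 \<le> b" "b \<le> 51/16" shows "0 < g a b"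
  by (rule box[of "13/8" "7/4" "193/64" "51/16" "2623/2048" "5883/4096" "11653/4096" "12397/4096" a b, OF _ assms]) (simp add: boxok_def power_divide)

lemma n163: assumes "13/8 \<le> a" "a \<le> 7/4" "91/32 \<le> b" "b \<le> 51/16" shows "0 < g a b"
  using assms n164[of a b] n167[of a b] by (cases "b \<le> 193/64") auto

lemma n159: assumes "3/2 \<le> a" "a \<le> 7/4" "91/32 \<le> b" "b \<le> 51/16" shows "0 < g a b"
  using assms n160[of a b] n163[of a b] by (cases "a \<le> 13/8") auto

lemma n79: assumes "3/2 \<le> a" "a \<le> 7/4" "5/2 \<le> b" "b \<le> 51/16" shows "0 < g a b"
  using assms n80[of a b] n159[of a b] by (cases "b \<le> 91/32") auto

lemma n173: assumes "7/4 \<le> a" "a \<le> 29/16" "5/2 \<le> b" "b \<le> 331/128" shows "0 < g a b"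
  by (rule box[of "7/4" "29/16" "5/2" "331/128" "2941/2048" "387/256" "9385/4096" "1221/512" a b, OF _ assms]) (simp add: boxok_def power_divide)

lemma n174: assumes "7/4 \<le> a" "a \<le> 29/16" "331/128 \<le> b" "b \<le> 171/64" shows "0 < g a b"
  by (rule box[of "7/4" "29/16" "331/128" "171/64" "2941/2048" "387/256" "9767/4096" "10149/4096" a b, OF _ assms]) (simp add: boxok_def power_divide)

lemma n172: assumes "7/4 \<le> a" "a \<le> 29/16" "5/2 \<le> b" "b \<le> 171/64" shows "0 < g a b"
  using assms n173[of a b] n174[of a b] by (cases "b \<le> 331/128") auto

lemma n175: assumes "29/16 \<le> a" "a \<le> 15/8" "5/2 \<le> b" "b \<le> 171/64" shows "0 < g a b"
  by (rule box[of "29/16" "15/8" "5/2" "171/64" "6191/4096" "6497/4096" "9385/4096" "10149/4096" a b, OF _ assms]) (simp add: boxok_def power_divide)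

lemma n171: assumes "7/4 \<le> a" "a \<le> 15/8" "5/2 \<le> b" "b \<le> 171/64" shows "0 < g a b"
  using assms n172[of a b] n175[of a b] by (cases "a \<le> 29/16") auto

lemma n176: assumes "7/4 \<le> a" "a \<le> 15/8" "171/64 \<le> b" "b \<le> 91/32" shows "0 < g a b"
  by (rule box[of "7/4" "15/8" "171/64" "91/32" "2941/2048" "6497/4096" "2537/1024" "10905/4096" a b, OF _ assms]) (simp add: boxok_def power_divide)

lemma n170: assumes "7/4 \<le> a" "a \<le> 15/8" "5/2 \<le> b" "b \<le> 91/32" shows "0 < g a b"
  using assms n171[of a b] n176[of a b] by (cases "b \<le> 171/64") auto

lemma n177: assumes "15/8 \<le> a" "a \<le> 2" "5/2 \<le> b" "b \<le> 91/32" shows "0 < g a b"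
  by (rule box[of "15/8" "2" "5/2" "91/32" "203/128" "7095/4096" "9385/4096" "10905/4096" a b, OF _ assms]) (simp add: boxok_def power_divide)

lemma n169: assumes "7/4 \<le> a" "a \<le> 2" "5/2 \<le> b" "b \<le> 91/32" shows "0 < g a b"
  using assms n170[of a b] n177[of a b] by (cases "a \<le> 15/8") auto

lemma n180: assumes "7/4 \<le> a" "a \<le> 15/8" "91/32 \<le> b" "b \<le> 193/64" shows "0 < g a b"
  by (rule box[of "7/4" "15/8" "91/32" "193/64" "2941/2048" "6497/4096" "1363/512" "5827/2048" a b, OF _ assms]) (simp add: boxok_def power_divide)

lemma n181: assumes "7/4 \<le> a" "a \<le> 15/8" "193/64 \<le> b" "b \<le> 51/16" shows "0 < g a b"
  by (rule box[of "7/4" "15/8" "193/64" "51/16" "2941/2048" "6497/4096" "11653/4096" "12397/4096" a b, OF _ assms]) (simp add: boxok_def power_divide)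

lemma n179: assumes "7/4 \<le> a" "a \<le> 15/8" "91/32 \<le> b" "b \<le> 51/16" shows "0 < g a b"
  using assms n180[of a b] n181[of a b] by (cases "b \<le> 193/64") auto

lemma n182: assumes "15/8 \<le> a" "a \<le> 2" "91/32 \<le> b" "b \<le> 51/16" shows "0 < g a b"
  by (rule box[of "15/8" "2" "91/32" "51/16" "203/128" "7095/4096" "1363/512" "12397/4096" a b, OF _ assms]) (simp add: boxok_def power_divide)

lemma n178: assumes "7/4 \<le> a" "a \<le> 2" "91/32 \<le> b" "b \<le> 51/16" shows "0 < g a b"
  using assms n179[of a b] n182[of a b] by (cases "a \<le> 15/8") auto

lemma n168: assumes "7/4 \<le> a" "a \<le> 2" "5/2 \<le> b" "b \<le> 51/16" shows "0 < g a b"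
  using assms n169[of a b] n178[of a b] by (cases "b \<le> 91/32") auto

lemma n78: assumes "3/2 \<le> a" "a \<le> 2" "5/2 \<le> b" "b \<le> 51/16" shows "0 < g a b"
  using assms n79[of a b] n168[of a b] by (cases "a \<le> 7/4") auto

lemma n185: assumes "3/2 \<le> a" "a \<le> 7/4" "51/16 \<le> b" "b \<le> 113/32" shows "0 < g a b"
  by (rule box[of "3/2" "7/4" "51/16" "113/32" "4579/4096" "5883/4096" "3099/1024" "867/256" a b, OF _ assms]) (simp add: boxok_def power_divide)

lemma n186: assumes "3/2 \<le> a" "a \<le> 7/4" "113/32 \<le> b" "b \<le> 31/8" shows "0 < g a b"
  by (rule box[of "3/2" "7/4" "113/32" "31/8" "4579/4096" "5883/4096" "13871/4096" "15335/4096" a b, OF _ assms]) (simp add: boxok_def power_divide)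

lemma n184: assumes "3/2 \<le> a" "a \<le> 7/4" "51/16 \<le> b" "b \<le> 31/8" shows "0 < g a b"
  using assms n185[of a b] n186[of a b] by (cases "b \<le> 113/32") auto

lemma n188: assumes "7/4 \<le> a" "a \<le> 2" "51/16 \<le> b" "b \<le> 113/32" shows "0 < g a b"
  by (rule box[of "7/4" "2" "51/16" "113/32" "2941/2048" "7095/4096" "3099/1024" "867/256" a b, OF _ assms]) (simp add: boxok_def power_divide)

lemma n189: assumes "7/4 \<le> a" "a \<le> 2" "113/32 \<le> b" "b \<le> 31/8" shows "0 < g a b"
  by (rule box[of "7/4" "2" "113/32" "31/8" "2941/2048" "7095/4096" "13871/4096" "15335/4096" a b, OF _ assms]) (simp add: boxok_def power_divide)

lemma n187: assumes "7/4 \<le> a" "a \<le> 2" "51/16 \<le> b" "b \<le> 31/8" shows "0 < g a b"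
  using assms n188[of a b] n189[of a b] by (cases "b \<le> 113/32") auto

lemma n183: assumes "3/2 \<le> a" "a \<le> 2" "51/16 \<le> b" "b \<le> 31/8" shows "0 < g a b"
  using assms n184[of a b] n187[of a b] by (cases "a \<le> 7/4") auto

lemma n77: assumes "3/2 \<le> a" "a \<le> 2" "5/2 \<le> b" "b \<le> 31/8" shows "0 < g a b"
  using assms n78[of a b] n183[of a b] by (cases "b \<le> 51/16") auto

lemma n1: assumes "1 \<le> a" "a \<le> 2" "5/2 \<le> b" "b \<le> 31/8" shows "0 < g a b"
  using assms n2[of a b] n77[of a b] by (cases "a \<le> 3/2") auto


theorem lemma5:
  fixes a b :: real
  assumes "1 \<le> a" "a \<le> 2" "5/2 \<le> b" "b \<le> sqrt 2 * (sqrt 3 + 1)"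
  shows "g a b \<noteq> 0"
proof -
  have s3: "sqrt 3 \<le> 17321/10000" by (rule real_le_lsqrt) (auto simp: power_divide)
  have s2: "sqrt 2 \<le> 14143/10000" by (rule real_le_lsqrt) (auto simp: power_divide)
  have "sqrt 2 * (sqrt 3 + 1) \<le> 14143/10000 * (17321/10000 + 1)"
    using s2 s3 by (intro mult_mono) auto
  moreover have "14143/10000 * (17321/10000 + 1) \<le> (31/8::real)" by simp
  ultimately have "b \<le> 31/8" using assms(4) by linarith
  hence "0 < g a b" using assms(1,2,3) by (intro n1)
  thus ?thesis by linarith
qed

end
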